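(* Let $r$ be a positive integer and suppose $1/(r+1)<\vartheta<1$. Let $(Z_t)$ be the random walk of the context with $c=1$, and let $\varrho\in(0,1)$ be the unique solution in $[0,1)$ of $\varrho=(1-\vartheta)+\vartheta\varrho^{r+1}$. Let $\varphi(z):=\mathbb{E}[z^{\tau(1)}\mathbf{1}\{\tau(1)<\infty\}]$ for $z\in[-1,1]$; it satisfies $\varphi(z)=z(1-\vartheta)+z\vartheta\varphi(z)^{r+1}$. Then for all $u\in\mathbb{N}$, $$\mathbb{E}[\tau(u)\mid\tau(u)<\infty]=u\,\frac{\varphi'(1)}{\varrho}=\frac{u\varrho}{(1-\vartheta)(r+1)-r\varrho},$$ where $\varphi'(1)$ is the derivative from below. In particular, for the single-agent trust model with prior parameters $\alpha,\beta\in\mathbb{N}$ and $c=1$, the expected quitting time conditional on quitting is $q(\alpha,\beta,1,r,\vartheta)=\mathbb{E}[\tau(u_{\rm crit})\mid\tau(u_{\rm crit})<\infty]$ with $u_{\rm crit}=r\alpha-\beta+1$.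
   Context: Random walk: for $\vartheta\in(0,1)$ and positive integers $c,r$, let $Z_0=0$ and $Z_t=Z_{t-1}+\Delta_t$ with $\Delta_t$ i.i.d., $\Delta_t=+c$ with probability $1-\vartheta$ and $-r$ with probability $\vartheta$. Define $\tau(u):=\inf\{t\in\mathbb{N}_0: Z_t\ge u\}$. Single-agent trust model: $(X_t)$ i.i.d. Bernoulli$(\vartheta)$; $\hat S_t=\sum_{s\le t}X_s\mathbf{1}_{\{A_s=1\}}$, $\hat F_t=\sum_{s\le t}(1-X_s)\mathbf{1}_{\{A_s=1\}}$, $\hat\vartheta_t=\frac{\alpha+\hat S_t}{\alpha+\beta+\hat S_t+\hat F_t}$; $A_t=1$ iff $r\hat\vartheta_n-c(1-\hat\vartheta_n)\ge0$ for all $n\le t-1$; $\tau:=\inf\{t: r\hat\vartheta_t-c(1-\hat\vartheta_t)<0\}$ (the first $t$ with $c\hat F_t-r\hat S_t\ge r\alpha-c\beta+1$); $q(\alpha,\beta,c,r,\vartheta):=\mathbb{E}[\tau\mid\tau<\infty]$. *)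

theory Defs
  imports "HOL-Probability.Probability"
begin

text \<open>Path space: an i.i.d. sequence of Bernoulli(theta) coins; coin s (0-based) is the
  (s+1)-th draw. True = "failure step -r" in the walk, True = "X = 1" in the trust model.\<close>
definition bern_paths :: "real \<Rightarrow> bool stream measure" where
  "bern_paths \<theta> = stream_space (measure_pmf (bernoulli_pmf \<theta>))"

definition walk_step :: "nat \<Rightarrow> nat \<Rightarrow> bool \<Rightarrow> int" where
  "walk_step c r b = (if b then - int r else int c)"

definition walk :: "nat \<Rightarrow> nat \<Rightarrow> bool stream \<Rightarrow> nat \<Rightarrow> int" where
  "walk c r \<omega> t = (\<Sum>s<t. walk_step c r (\<omega> !! s))"

definition hit_time :: "nat \<Rightarrow> nat \<Rightarrow> int \<Rightarrow> bool stream \<Rightarrow> enat" where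
  "hit_time c r u \<omega> =
     (if \<exists>t. walk c r \<omega> t \<ge> u then enat (LEAST t. walk c r \<omega> t \<ge> u) else \<infinity>)"

definition cond_mean :: "'a measure \<Rightarrow> ('a \<Rightarrow> enat) \<Rightarrow> real" where
  "cond_mean M T =
     (\<integral>\<omega>. (if T \<omega> < \<infinity> then real (the_enat (T \<omega>)) else 0) \<partial>M)
       / measure M {\<omega> \<in> space M. T \<omega> < \<infinity>}"

definition gen_fun :: "nat \<Rightarrow> real \<Rightarrow> real \<Rightarrow> real" where
  "gen_fun r \<theta> z =
     (\<integral>\<omega>. (if hit_time 1 r 1 \<omega> < \<infinity> then z ^ the_enat (hit_time 1 r 1 \<omega>) else 0)
        \<partial>bern_paths \<theta>)"

definition theta_hat :: "nat \<Rightarrow> nat \<Rightarrow> nat \<Rightarrow> nat \<Rightarrow> real" where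
  "theta_hat \<alpha> \<beta> S F = (real \<alpha> + real S) / (real \<alpha> + real \<beta> + real S + real F)"

definition trust_ok :: "nat \<Rightarrow> nat \<Rightarrow> nat \<Rightarrow> nat \<Rightarrow> nat \<Rightarrow> nat \<Rightarrow> bool" where
  "trust_ok \<alpha> \<beta> c r S F =
     (real r * theta_hat \<alpha> \<beta> S F - real c * (1 - theta_hat \<alpha> \<beta> S F) \<ge> 0)"

text \<open>trust_state ... t = (S_t, F_t, ok_t) where ok_t holds iff the trust condition held
  for all n <= t, i.e. ok_t = (A_{t+1} = 1).  X_{t+1} = omega !! t.\<close>
fun trust_state :: "nat \<Rightarrow> nat \<Rightarrow> nat \<Rightarrow> nat \<Rightarrow> bool stream \<Rightarrow> nat \<Rightarrow> nat \<times> nat \<times> bool" where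
  "trust_state \<alpha> \<beta> c r \<omega> 0 = (0, 0, trust_ok \<alpha> \<beta> c r 0 0)"
| "trust_state \<alpha> \<beta> c r \<omega> (Suc t) =
     (case trust_state \<alpha> \<beta> c r \<omega> t of (S, F, ok) \<Rightarrow>
        let S' = (if ok \<and> \<omega> !! t then Suc S else S);
            F' = (if ok \<and> \<not> \<omega> !! t then Suc F else F)
        in (S', F', ok \<and> trust_ok \<alpha> \<beta> c r S' F'))"

definition S_hat :: "nat \<Rightarrow> nat \<Rightarrow> nat \<Rightarrow> nat \<Rightarrow> bool stream \<Rightarrow> nat \<Rightarrow> nat" where
  "S_hat \<alpha> \<beta> c r \<omega> t = fst (trust_state \<alpha> \<beta> c r \<omega> t)"

definition F_hat :: "nat \<Rightarrow> nat \<Rightarrow> nat \<Rightarrow> nat \<Rightarrow> bool stream \<Rightarrow> nat \<Rightarrow> nat" where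
  "F_hat \<alpha> \<beta> c r \<omega> t = fst (snd (trust_state \<alpha> \<beta> c r \<omega> t))"

definition trust_tau :: "nat \<Rightarrow> nat \<Rightarrow> nat \<Rightarrow> nat \<Rightarrow> bool stream \<Rightarrow> enat" where
  "trust_tau \<alpha> \<beta> c r \<omega> =
     (if \<exists>t. \<not> trust_ok \<alpha> \<beta> c r (S_hat \<alpha> \<beta> c r \<omega> t) (F_hat \<alpha> \<beta> c r \<omega> t)
      then enat (LEAST t. \<not> trust_ok \<alpha> \<beta> c r (S_hat \<alpha> \<beta> c r \<omega> t) (F_hat \<alpha> \<beta> c r \<omega> t))
      else \<infinity>)"

definition q :: "nat \<Rightarrow> nat \<Rightarrow> nat \<Rightarrow> nat \<Rightarrow> real \<Rightarrow> real" where
  "q \<alpha> \<beta> c r \<theta> = cond_mean (bern_paths \<theta>) (trust_tau \<alpha> \<beta> c r)"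

end

theory Submission
  imports Defs
begin


lemma walk_0[simp]: "walk c r \<omega> 0 = 0"
  by (simp add: walk_def)

lemma walk_Suc_Stream: "walk c r (x ## \<omega>) (Suc t) = walk_step c r x + walk c r \<omega> t"
  unfolding walk_def sum.lessThan_Suc_shift by simp

lemma hit_eq: "hit_time c r u \<omega> = enat n \<longleftrightarrow> (u \<le> walk c r \<omega> n \<and> (\<forall>t<n. walk c r \<omega> t < u))"
proof
  assume h: "hit_time c r u \<omega> = enat n"
  then have ex: "\<exists>t. walk c r \<omega> t \<ge> u" unfolding hit_time_def by (auto split: if_splits)
  with h have n: "n = (LEAST t. walk c r \<omega> t \<ge> u)" unfolding hit_time_def by auto
  show "u \<le> walk c r \<omega> n \<and> (\<forall>t<n. walk c r \<omega> t < u)"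
    using LeastI_ex[OF ex] not_less_Least n by force
next
  assume h: "u \<le> walk c r \<omega> n \<and> (\<forall>t<n. walk c r \<omega> t < u)"
  then have "(LEAST t. walk c r \<omega> t \<ge> u) = n"
    by (intro Least_equality) (auto simp: not_less[symmetric])
  then show "hit_time c r u \<omega> = enat n" using h unfolding hit_time_def by auto
qed

lemma hit_fin: "hit_time c r u \<omega> < \<infinity> \<longleftrightarrow> (\<exists>n. hit_time c r u \<omega> = enat n)"
  by (cases "hit_time c r u \<omega>") auto

lemma hit_0: "hit_time c r u \<omega> = enat 0 \<longleftrightarrow> u \<le> 0"
  by (simp add: hit_eq)

lemma hit_Suc_Stream:
  assumes "1 \<le> u"
  shows "hit_time c r u (x ## \<omega>) = enat (Suc n) \<longleftrightarrow> hit_time c r (u - walk_step c r x) \<omega> = enat n"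
  unfolding hit_eq walk_Suc_Stream using assms
  by (auto simp: All_less_Suc2 walk_Suc_Stream)

fun Pn :: "nat \<Rightarrow> real \<Rightarrow> nat \<Rightarrow> nat \<Rightarrow> real" where
  "Pn r \<theta> 0 u = (if u = 0 then 1 else 0)"
| "Pn r \<theta> (Suc n) u = (if u = 0 then 0 else (1 - \<theta>) * Pn r \<theta> n (u - 1) + \<theta> * Pn r \<theta> n (u + r))"

lemma space_bern[simp]: "space (bern_paths \<theta>) = UNIV"
  by (simp add: bern_paths_def space_stream_space)

lemma hit_Suc_nat:
  "hit_time 1 r (int u) (x ## \<omega>) = enat (Suc n) \<longleftrightarrow>
     u \<noteq> 0 \<and> (if x then hit_time 1 r (int (u + r)) \<omega> = enat n else hit_time 1 r (int (u - 1)) \<omega> = enat n)"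
proof (cases "u = 0")
  case True
  have "walk 1 r (x ## \<omega>) 0 = 0" by simp
  then show ?thesis using True by (auto simp add: hit_eq)
next
  case False
  then show ?thesis using hit_Suc_Stream[of "int u" 1 r x \<omega> n]
    by (simp add: walk_step_def of_nat_diff)
qed

lemma hit_meas:
  "Measurable.pred (bern_paths \<theta>) (\<lambda>\<omega>. hit_time 1 r (int u) \<omega> = enat n)"
proof (induction n arbitrary: u)
  case 0
  then show ?case by (simp add: hit_0)
next
  case (Suc n)
  have eq: "(\<lambda>\<omega>. hit_time 1 r (int u) \<omega> = enat (Suc n)) =
    (\<lambda>\<omega>. u \<noteq> 0 \<and> (if shd \<omega> then hit_time 1 r (int (u + r)) (stl \<omega>) = enat n
                       else hit_time 1 r (int (u - 1)) (stl \<omega>) = enat n))"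
  proof
    fix \<omega> :: "bool stream"
    show "(hit_time 1 r (int u) \<omega> = enat (Suc n)) = (u \<noteq> 0 \<and> (if shd \<omega> then hit_time 1 r (int (u + r)) (stl \<omega>) = enat n
                       else hit_time 1 r (int (u - 1)) (stl \<omega>) = enat n))"
      using hit_Suc_nat[of r u "shd \<omega>" "stl \<omega>" n] by (simp only: stream.collapse)
  qed
  note [measurable] = Suc.IH[unfolded bern_paths_def]
  show ?case unfolding eq unfolding bern_paths_def by measurable
qed

lemma Pn_nonneg: "0 \<le> \<theta> \<Longrightarrow> \<theta> \<le> 1 \<Longrightarrow> 0 \<le> Pn r \<theta> n u"
  by (induction n arbitrary: u) auto

lemma prob_bern: "prob_space (bern_paths \<theta>)"
  unfolding bern_paths_def
  by (rule prob_space.prob_space_stream_space[OF prob_space_measure_pmf])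

lemma hit_sets[measurable]: "{\<omega>. hit_time 1 r (int u) \<omega> = enat n} \<in> sets (bern_paths \<theta>)"
  using hit_meas[where \<theta>=\<theta> and r=r and u=u and n=n] by (simp add: pred_def)

lemma hit_emeasure:
  assumes th: "0 \<le> \<theta>" "\<theta> \<le> 1"
  shows "emeasure (bern_paths \<theta>) {\<omega>. hit_time 1 r (int u) \<omega> = enat n} = ennreal (Pn r \<theta> n u)"
proof (induction n arbitrary: u)
  case 0
  interpret P: prob_space "bern_paths \<theta>" by (rule prob_bern)
  show ?case
  proof (cases "u = 0")
    case True
    then have "{\<omega>. hit_time 1 r (int u) \<omega> = enat 0} = space (bern_paths \<theta>)"
      by (auto simp: hit_0)
    then show ?thesis using True P.emeasure_space_1 by simp
  next
    case False
    then have "{\<omega>. hit_time 1 r (int u) \<omega> = enat 0} = {}"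
      by (auto simp: hit_0)
    then show ?thesis using False by simp
  qed
next
  case (Suc n)
  let ?M = "measure_pmf (bernoulli_pmf \<theta>)"
  let ?X = "{\<omega>. hit_time 1 r (int u) \<omega> = enat (Suc n)}"
  have IH: "\<And>v. emeasure (stream_space ?M) {\<omega>. hit_time 1 r (int v) \<omega> = enat n} = ennreal (Pn r \<theta> n v)"
    using Suc.IH unfolding bern_paths_def by blast
  have X: "?X \<in> sets (stream_space ?M)" using hit_sets[of r u "Suc n" \<theta>] by (simp add: bern_paths_def)
  have "emeasure (stream_space ?M) ?X =
      (\<integral>\<^sup>+t. emeasure (stream_space ?M) {x\<in>space (stream_space ?M). t ## x \<in> ?X} \<partial>?M)"
    by (rule prob_space.emeasure_stream_space[OF prob_space_measure_pmf X])
  also have "\<dots> = (\<integral>\<^sup>+t. (if u = 0 then 0 else if t then ennreal (Pn r \<theta> n (u + r)) else ennreal (Pn r \<theta> n (u - 1))) \<partial>?M)"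
  proof (intro nn_integral_cong)
    fix t :: bool
    have "{x\<in>space (stream_space ?M). t ## x \<in> ?X} =
       (if u = 0 then {} else if t then {\<omega>. hit_time 1 r (int (u + r)) \<omega> = enat n}
        else {\<omega>. hit_time 1 r (int (u - 1)) \<omega> = enat n})"
      using hit_Suc_nat[of r u t _ n] by (auto simp: space_stream_space)
    note E = this
    show "emeasure (stream_space ?M) {x\<in>space (stream_space ?M). t ## x \<in> ?X} =
      (if u = 0 then 0 else if t then ennreal (Pn r \<theta> n (u + r)) else ennreal (Pn r \<theta> n (u - 1)))"
      by (subst E) (simp only: if_distrib[where f="emeasure (stream_space ?M)"] emeasure_empty IH)
  qed
  also have "\<dots> = (\<Sum>t\<in>UNIV. (if u = 0 then 0 else if t then ennreal (Pn r \<theta> n (u + r)) else ennreal (Pn r \<theta> n (u - 1))) * pmf (bernoulli_pmf \<theta>) t)"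
    by (rule nn_integral_measure_pmf_support) auto
  also have "\<dots> = ennreal (Pn r \<theta> (Suc n) u)"
    using th Pn_nonneg[OF th]
  proof (cases "u = 0")
    case False
    have a: "0 \<le> Pn r \<theta> n (u + r)" "0 \<le> Pn r \<theta> n (u - 1)" using Pn_nonneg[OF th] by auto
    have "(\<Sum>t\<in>UNIV. (if u = 0 then 0 else if t then ennreal (Pn r \<theta> n (u + r)) else ennreal (Pn r \<theta> n (u - 1))) * pmf (bernoulli_pmf \<theta>) t)
       = ennreal (Pn r \<theta> n (u + r)) * ennreal \<theta> + ennreal (Pn r \<theta> n (u - 1)) * ennreal (1 - \<theta>)"
      using False th by (simp add: UNIV_bool)
    also have "\<dots> = ennreal (Pn r \<theta> n (u + r) * \<theta> + Pn r \<theta> n (u - 1) * (1 - \<theta>))"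
      using a th by (simp add: ennreal_mult' ennreal_plus)
    also have "\<dots> = ennreal (Pn r \<theta> (Suc n) u)"
      using False by (simp add: algebra_simps)
    finally show ?thesis .
  qed simp
  finally show ?case by (simp add: bern_paths_def)
qed



lemma hit_measurable[measurable]:
  "hit_time 1 r (int u) \<in> measurable (bern_paths \<theta>) (count_space UNIV)"
proof -
  have "hit_time 1 r (int u) -` {a} \<inter> space (bern_paths \<theta>) \<in> sets (bern_paths \<theta>)" for a
  proof (cases a)
    case (enat n)
    then show ?thesis using hit_sets[of r u n \<theta>] by (simp add: vimage_def Collect_conv_if)
  next
    case infinity
    have "hit_time 1 r (int u) -` {a} \<inter> space (bern_paths \<theta>) =
       space (bern_paths \<theta>) - (\<Union>n. {\<omega>. hit_time 1 r (int u) \<omega> = enat n})"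
      using infinity by (auto simp add: not_infinity_eq)
    also have "\<dots> \<in> sets (bern_paths \<theta>)" by measurable
    finally show ?thesis .
  qed
  then show ?thesis by (subst measurable_count_space_eq2_countable) simp
qed

lemma hit_comp_meas:
  "(\<lambda>\<omega>. f (hit_time 1 r (int u) \<omega>)) \<in> borel_measurable (bern_paths \<theta>)"
  by (rule measurable_compose[OF hit_measurable]) (simp add: measurable_count_space_eq1)

lemma hit_fin_sets[measurable]:
  "{\<omega> \<in> space (bern_paths \<theta>). hit_time 1 r (int u) \<omega> < \<infinity>} \<in> sets (bern_paths \<theta>)"
proof -
  have "{\<omega> \<in> space (bern_paths \<theta>). hit_time 1 r (int u) \<omega> < \<infinity>} = (\<Union>n. {\<omega>. hit_time 1 r (int u) \<omega> = enat n})"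
    by (auto simp: hit_fin)
  also have "\<dots> \<in> sets (bern_paths \<theta>)" by measurable
  finally show ?thesis .
qed

lemma hit_nn_integral:
  assumes th: "0 \<le> \<theta>" "\<theta> \<le> 1" and g: "\<And>n. 0 \<le> g n"
    and s: "summable (\<lambda>n. g n * Pn r \<theta> n u)"
  shows "(\<integral>\<^sup>+\<omega>. ennreal (if hit_time 1 r (int u) \<omega> < \<infinity> then g (the_enat (hit_time 1 r (int u) \<omega>)) else 0) \<partial>bern_paths \<theta>)
     = ennreal (\<Sum>n. g n * Pn r \<theta> n u)"
proof -
  let ?T = "hit_time 1 r (int u)"
  let ?A = "\<lambda>n. {\<omega>. ?T \<omega> = enat n}"
  have pw: "ennreal (if ?T \<omega> < \<infinity> then g (the_enat (?T \<omega>)) else 0) =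
      (\<Sum>n. ennreal (g n) * indicator (?A n) \<omega>)" for \<omega>
  proof (cases "?T \<omega>")
    case (enat m)
    have "(\<lambda>n. ennreal (g n) * indicator (?A n) \<omega>) = (\<lambda>n. if n = m then ennreal (g n) else 0)"
      using enat by (auto simp: indicator_def)
    then have "(\<Sum>n. ennreal (g n) * indicator (?A n) \<omega>) = ennreal (g m)"
      using sums_single[of m "\<lambda>n. ennreal (g n)"] sums_unique by metis
    then show ?thesis using enat by simp
  next
    case infinity
    then show ?thesis by (simp add: indicator_def)
  qed
  have "(\<integral>\<^sup>+\<omega>. ennreal (if ?T \<omega> < \<infinity> then g (the_enat (?T \<omega>)) else 0) \<partial>bern_paths \<theta>)
     = (\<integral>\<^sup>+\<omega>. (\<Sum>n. ennreal (g n) * indicator (?A n) \<omega>) \<partial>bern_paths \<theta>)"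
    by (simp only: pw)
  also have "\<dots> = (\<Sum>n. \<integral>\<^sup>+\<omega>. ennreal (g n) * indicator (?A n) \<omega> \<partial>bern_paths \<theta>)"
    by (rule nn_integral_suminf) measurable
  also have "\<dots> = (\<Sum>n. ennreal (g n * Pn r \<theta> n u))"
  proof (rule suminf_cong)
    fix n
    have "(\<integral>\<^sup>+\<omega>. ennreal (g n) * indicator (?A n) \<omega> \<partial>bern_paths \<theta>) = ennreal (g n) * emeasure (bern_paths \<theta>) (?A n)"
      by (rule nn_integral_cmult_indicator) (rule hit_sets)
    also have "\<dots> = ennreal (g n) * ennreal (Pn r \<theta> n u)"
      by (subst hit_emeasure[OF th]) (rule refl)
    also have "\<dots> = ennreal (g n * Pn r \<theta> n u)"
      using g Pn_nonneg[OF th] by (simp add: ennreal_mult)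
    finally show "(\<integral>\<^sup>+\<omega>. ennreal (g n) * indicator (?A n) \<omega> \<partial>bern_paths \<theta>) = ennreal (g n * Pn r \<theta> n u)" .
  qed
  also have "\<dots> = ennreal (\<Sum>n. g n * Pn r \<theta> n u)"
    using s g Pn_nonneg[OF th] by (intro suminf_ennreal2) auto
  finally show ?thesis .
qed

lemma hit_integral:
  assumes th: "0 \<le> \<theta>" "\<theta> \<le> 1" and g: "\<And>n. 0 \<le> g n"
    and s: "summable (\<lambda>n. g n * Pn r \<theta> n u)"
  shows "(\<integral>\<omega>. (if hit_time 1 r (int u) \<omega> < \<infinity> then g (the_enat (hit_time 1 r (int u) \<omega>)) else 0) \<partial>bern_paths \<theta>)
     = (\<Sum>n. g n * Pn r \<theta> n u)"
proof -
  have "(\<integral>\<omega>. (if hit_time 1 r (int u) \<omega> < \<infinity> then g (the_enat (hit_time 1 r (int u) \<omega>)) else 0) \<partial>bern_paths \<theta>)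
    = enn2real (\<integral>\<^sup>+\<omega>. ennreal (if hit_time 1 r (int u) \<omega> < \<infinity> then g (the_enat (hit_time 1 r (int u) \<omega>)) else 0) \<partial>bern_paths \<theta>)"
    by (rule integral_eq_nn_integral[OF hit_comp_meas[where f="\<lambda>x. if x < \<infinity> then g (the_enat x) else (0::real)"]]) (auto simp: g)
  also have "\<dots> = (\<Sum>n. g n * Pn r \<theta> n u)"
    using hit_nn_integral[OF th g s] suminf_nonneg[OF s] g Pn_nonneg[OF th] by simp
  finally show ?thesis .
qed

lemma hit_measure:
  assumes th: "0 \<le> \<theta>" "\<theta> \<le> 1"
    and s: "summable (\<lambda>n. Pn r \<theta> n u)"
  shows "measure (bern_paths \<theta>) {\<omega> \<in> space (bern_paths \<theta>). hit_time 1 r (int u) \<omega> < \<infinity>} = (\<Sum>n. Pn r \<theta> n u)"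
proof -
  have "emeasure (bern_paths \<theta>) {\<omega> \<in> space (bern_paths \<theta>). hit_time 1 r (int u) \<omega> < \<infinity>}
    = (\<integral>\<^sup>+\<omega>. ennreal (if hit_time 1 r (int u) \<omega> < \<infinity> then (\<lambda>_. 1) (the_enat (hit_time 1 r (int u) \<omega>)) else 0) \<partial>bern_paths \<theta>)"
    by (subst nn_integral_indicator[symmetric, OF hit_fin_sets]) (auto intro!: nn_integral_cong simp: indicator_def)
  also have "\<dots> = ennreal (\<Sum>n. Pn r \<theta> n u)"
    using hit_nn_integral[OF th, of "\<lambda>_. 1"] s by simp
  finally show ?thesis using suminf_nonneg[OF s] Pn_nonneg[OF th] by (simp add: measure_def)
qed

lemma cond_mean_hit:
  assumes th: "0 \<le> \<theta>" "\<theta> \<le> 1"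
    and s1: "summable (\<lambda>n. Pn r \<theta> n u)" and s2: "summable (\<lambda>n. real n * Pn r \<theta> n u)"
  shows "cond_mean (bern_paths \<theta>) (hit_time 1 r (int u)) = (\<Sum>n. real n * Pn r \<theta> n u) / (\<Sum>n. Pn r \<theta> n u)"
  unfolding cond_mean_def using hit_integral[OF th _ s2] hit_measure[OF th s1] by simp

lemma gen_fun_eq:
  assumes th: "0 \<le> \<theta>" "\<theta> \<le> 1" and z: "0 \<le> z" "z \<le> 1"
    and s1: "summable (\<lambda>n. Pn r \<theta> n 1)"
  shows "gen_fun r \<theta> z = (\<Sum>n. z ^ n * Pn r \<theta> n 1)"
proof -
  have s: "summable (\<lambda>n. z ^ n * Pn r \<theta> n 1)"
    using z Pn_nonneg[OF th] by (intro summable_comparison_test[OF _ s1]) (auto intro!: mult_left_le_one_le power_le_one)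
  show ?thesis unfolding gen_fun_def
    by (rule hit_integral[OF th _ s, unfolded of_nat_1]) (use z in auto)
qed



lemma pow_diff_le:
  fixes x y :: real
  assumes "0 \<le> x" "x \<le> y"
  shows "y ^ n - x ^ n \<le> real n * y ^ (n - 1) * (y - x)"
proof (induction n)
  case 0
  then show ?case by simp
next
  case (Suc n)
  have "y ^ Suc n - x ^ Suc n = y * (y ^ n - x ^ n) + x ^ n * (y - x)"
    by (simp add: algebra_simps)
  also have "\<dots> \<le> y * (real n * y ^ (n - 1) * (y - x)) + y ^ n * (y - x)"
    using assms Suc.IH
    by (intro add_mono mult_left_mono mult_right_mono power_mono) auto
  also have "y * (real n * y ^ (n - 1) * (y - x)) = real n * y ^ n * (y - x)"
    by (cases n) (auto simp: algebra_simps)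
  finally show ?case by (simp add: algebra_simps)
qed

context
  fixes r :: nat and \<theta> \<rho> :: real
  assumes r: "0 < r" and th0: "0 < \<theta>" and th1: "\<theta> < 1"
    and rho0: "0 \<le> \<rho>" and rho1: "\<rho> < 1"
    and fp: "\<rho> = (1 - \<theta>) + \<theta> * \<rho> ^ (r + 1)"
begin

definition LL :: real where "LL = 1 / (1 - \<theta> * (real r + 1) * \<rho> ^ r)"
definition AA :: "nat \<Rightarrow> real" where "AA u = (\<Sum>n. Pn r \<theta> n u)"
definition BB :: "nat \<Rightarrow> real" where "BB u = (\<Sum>n. real n * Pn r \<theta> n u)"

lemma rho_pos: "0 < \<rho>"
proof -
  have "0 \<le> \<theta> * \<rho> ^ (r + 1)" using th0 rho0 by simp
  then show ?thesis using fp th1 by linarith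
qed

lemma key_lt: "\<theta> * (real r + 1) * \<rho> ^ r < 1"
proof -
  define S where "S = (\<Sum>i<r+1. \<rho> ^ i)"
  have geo: "1 - \<rho> ^ (r + 1) = (1 - \<rho>) * S" unfolding S_def by (rule one_diff_power_eq)
  have h: "1 - \<rho> = \<theta> * (1 - \<rho> ^ (r + 1))" using fp by (simp add: algebra_simps)
  have "(1 - \<rho>) * (\<theta> * S - 1) = \<theta> * ((1 - \<rho>) * S) - (1 - \<rho>)" by (simp add: algebra_simps)
  also have "\<dots> = \<theta> * (1 - \<rho> ^ (r + 1)) - (1 - \<rho>)" by (simp only: geo)
  also have "\<dots> = 0" using h by simp
  finally have "(1 - \<rho>) * (\<theta> * S - 1) = 0" .
  then have tS: "\<theta> * S = 1" using rho1 by simp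
  have "(\<Sum>i<r+1. \<rho> ^ r) < S"
    unfolding S_def
  proof (rule sum_strict_mono_ex1)
    show "\<forall>x\<in>{..<r + 1}. \<rho> ^ r \<le> \<rho> ^ x"
      using rho0 rho1 by (auto intro!: power_decreasing)
    have "\<rho> ^ r < 1" using rho0 rho1 r by (simp add: power_less_one_iff)
    then show "\<exists>a\<in>{..<r + 1}. \<rho> ^ r < \<rho> ^ a" by (intro bexI[of _ 0]) auto
  qed simp
  then have "(real r + 1) * \<rho> ^ r < S" by (simp add: add.commute)
  then have "\<theta> * ((real r + 1) * \<rho> ^ r) < \<theta> * S" using th0 by simp
  then show ?thesis using tS by (simp add: mult.assoc)
qed

lemma LL_eq: "LL * (1 - \<theta> * (real r + 1) * \<rho> ^ r) = 1"
  using key_lt unfolding LL_def by simp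

lemma LL_pos: "0 < LL"
  using key_lt unfolding LL_def by simp

lemma p_nonneg: "0 \<le> Pn r \<theta> n u"
  using th0 th1 by (intro Pn_nonneg) auto

lemma p_zero: "Pn r \<theta> n 0 = (if n = 0 then 1 else 0)"
  by (cases n) auto

lemma partial_a: "(\<Sum>n<N. Pn r \<theta> n u) \<le> \<rho> ^ u"
proof (induction N arbitrary: u)
  case 0
  then show ?case using rho0 by simp
next
  case (Suc N)
  show ?case
  proof (cases u)
    case 0
    then show ?thesis by (simp add: sum.lessThan_Suc_shift p_zero)
  next
    case (Suc k)
    have "(\<Sum>n<Suc N. Pn r \<theta> n u) = (\<Sum>n<N. Pn r \<theta> (Suc n) u)"
      unfolding sum.lessThan_Suc_shift using Suc by simp
    also have "\<dots> = (1 - \<theta>) * (\<Sum>n<N. Pn r \<theta> n k) + \<theta> * (\<Sum>n<N. Pn r \<theta> n (u + r))"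
      using Suc by (simp add: sum.distrib sum_distrib_left)
    also have "\<dots> \<le> (1 - \<theta>) * \<rho> ^ k + \<theta> * \<rho> ^ (u + r)"
      using Suc.IH th0 th1 by (intro add_mono mult_left_mono) auto
    also have "\<dots> = \<rho> ^ k * ((1 - \<theta>) + \<theta> * \<rho> ^ (r + 1))"
      using Suc by (simp add: algebra_simps power_add)
    also have "\<dots> = \<rho> ^ u" using Suc fp by simp
    finally show ?thesis .
  qed
qed

lemma B_identity:
  "\<rho> ^ Suc k + (1 - \<theta>) * (real k * \<rho> ^ k * LL) + \<theta> * (real (Suc k + r) * \<rho> ^ (Suc k + r) * LL)
     = real (Suc k) * \<rho> ^ Suc k * LL"
proof -
  define x where "x = \<rho> ^ k"
  define P where "P = \<rho> ^ r"
  have e1: "\<rho> ^ Suc k = \<rho> * x" unfolding x_def by simp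
  have e2: "\<rho> ^ (Suc k + r) = \<rho> * x * P" unfolding x_def P_def by (simp add: power_add)
  have f: "\<rho> = (1 - \<theta>) + \<theta> * \<rho> * P" using fp unfolding P_def by (simp add: mult.assoc)
  have l: "LL * (1 - \<theta> * (real r + 1) * P) = 1" using LL_eq unfolding P_def .
  show ?thesis unfolding e1 e2 of_nat_add of_nat_Suc x_def[symmetric]
    using f l by algebra
qed

lemma partial_b: "(\<Sum>n<N. real n * Pn r \<theta> n u) \<le> real u * \<rho> ^ u * LL"
proof (induction N arbitrary: u)
  case 0
  then show ?case using rho0 LL_pos by simp
next
  case (Suc N)
  show ?case
  proof (cases u)
    case 0
    then show ?thesis unfolding sum.lessThan_Suc_shift by (simp add: p_zero)
  next
    case (Suc k)
    have "(\<Sum>n<Suc N. real n * Pn r \<theta> n u) = (\<Sum>n<N. real (Suc n) * Pn r \<theta> (Suc n) u)"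
      unfolding sum.lessThan_Suc_shift by simp
    also have "\<dots> = (\<Sum>n<N. Pn r \<theta> (Suc n) u + (1 - \<theta>) * (real n * Pn r \<theta> n k)
        + \<theta> * (real n * Pn r \<theta> n (u + r)))"
      by (intro sum.cong refl) (simp add: Suc algebra_simps)
    also have "\<dots> = (\<Sum>n<N. Pn r \<theta> (Suc n) u) + (1 - \<theta>) * (\<Sum>n<N. real n * Pn r \<theta> n k)
        + \<theta> * (\<Sum>n<N. real n * Pn r \<theta> n (u + r))"
      by (simp only: sum.distrib sum_distrib_left)
    also have "\<dots> \<le> \<rho> ^ u + (1 - \<theta>) * (real k * \<rho> ^ k * LL) + \<theta> * (real (u + r) * \<rho> ^ (u + r) * LL)"
    proof (intro add_mono mult_left_mono)
      have "(\<Sum>n<N. Pn r \<theta> (Suc n) u) \<le> (\<Sum>n<Suc N. Pn r \<theta> n u)"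
        unfolding sum.lessThan_Suc_shift using p_nonneg[of 0 u] by simp
      also have "\<dots> \<le> \<rho> ^ u" by (rule partial_a)
      finally show "(\<Sum>n<N. Pn r \<theta> (Suc n) u) \<le> \<rho> ^ u" .
    qed (use Suc.IH[of k] Suc.IH[of "u + r"] th0 th1 in auto)
    also have "\<dots> = real u * \<rho> ^ u * LL"
      using B_identity[of k] Suc by simp
    finally show ?thesis .
  qed
qed

lemma summable_a: "summable (\<lambda>n. Pn r \<theta> n u)"
  by (rule summableI_nonneg_bounded[OF p_nonneg partial_a])

lemma summable_b: "summable (\<lambda>n. real n * Pn r \<theta> n u)"
  by (rule summableI_nonneg_bounded[OF _ partial_b]) (simp add: p_nonneg)

lemma sums_a: "(\<lambda>n. Pn r \<theta> n u) sums AA u"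
  unfolding AA_def using summable_a by (rule summable_sums)

lemma sums_b: "(\<lambda>n. real n * Pn r \<theta> n u) sums BB u"
  unfolding BB_def using summable_b by (rule summable_sums)

lemma AA_le: "AA u \<le> \<rho> ^ u"
  unfolding AA_def by (rule suminf_le_const[OF summable_a partial_a])

lemma AA_nonneg: "0 \<le> AA u"
  unfolding AA_def by (rule suminf_nonneg[OF summable_a p_nonneg])

lemma AA_0: "AA 0 = 1"
proof -
  have "(\<lambda>n. Pn r \<theta> n 0) = (\<lambda>n. if n = 0 then 1 else 0)" by (simp add: p_zero)
  then have "(\<lambda>n. Pn r \<theta> n 0) sums 1" using sums_single[of 0 "\<lambda>_. 1::real"] by simp
  then show ?thesis using sums_a[of 0] sums_unique2 by blast
qed

lemma BB_0: "BB 0 = 0"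
proof -
  have "(\<lambda>n. real n * Pn r \<theta> n 0) = (\<lambda>n. 0)" by (rule ext) (simp add: p_zero)
  then show ?thesis unfolding BB_def by simp
qed

lemma conv: "Pn r \<theta> n (u + v) = (\<Sum>k\<le>n. Pn r \<theta> k u * Pn r \<theta> (n - k) v)"
proof (induction n arbitrary: u)
  case 0
  then show ?case by simp
next
  case (Suc n)
  show ?case
  proof (cases u)
    case 0
    have "(\<Sum>k\<le>Suc n. Pn r \<theta> k u * Pn r \<theta> (Suc n - k) v) = Pn r \<theta> (Suc n) v"
      unfolding sum.atMost_Suc_shift using 0 by (simp add: p_zero)
    then show ?thesis using 0 by simp
  next
    case (Suc j)
    have "Pn r \<theta> (Suc n) (u + v) = (1 - \<theta>) * Pn r \<theta> n (j + v) + \<theta> * Pn r \<theta> n ((u + r) + v)"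
      using Suc by (simp add: algebra_simps)
    also have "\<dots> = (\<Sum>k\<le>n. ((1 - \<theta>) * Pn r \<theta> k j + \<theta> * Pn r \<theta> k (u + r)) * Pn r \<theta> (n - k) v)"
      by (simp only: Suc.IH sum_distrib_left distrib_right mult.assoc sum.distrib)
    also have "\<dots> = (\<Sum>k\<le>n. Pn r \<theta> (Suc k) u * Pn r \<theta> (n - k) v)"
      using Suc by simp
    also have "\<dots> = (\<Sum>k\<le>Suc n. Pn r \<theta> k u * Pn r \<theta> (Suc n - k) v)"
      unfolding sum.atMost_Suc_shift using Suc by simp
    finally show ?thesis .
  qed
qed

lemma AA_mult: "AA (u + v) = AA u * AA v"
proof -
  have "(\<lambda>n. \<Sum>k\<le>n. Pn r \<theta> k u * Pn r \<theta> (n - k) v) sums (AA u * AA v)"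
    unfolding AA_def
    by (rule Cauchy_product_sums) (use summable_a p_nonneg in auto)
  then have "(\<lambda>n. Pn r \<theta> n (u + v)) sums (AA u * AA v)" by (simp only: conv)
  then show ?thesis using sums_a[of "u + v"] sums_unique2 by blast
qed

lemma BB_mult: "BB (u + v) = BB u * AA v + AA u * BB v"
proof -
  have s1: "(\<lambda>n. \<Sum>k\<le>n. (real k * Pn r \<theta> k u) * Pn r \<theta> (n - k) v) sums (BB u * AA v)"
    unfolding AA_def BB_def
    by (rule Cauchy_product_sums) (use summable_a summable_b p_nonneg in auto)
  have s2: "(\<lambda>n. \<Sum>k\<le>n. Pn r \<theta> k u * (real (n - k) * Pn r \<theta> (n - k) v)) sums (AA u * BB v)"
    unfolding AA_def BB_def
    by (rule Cauchy_product_sums) (use summable_a summable_b p_nonneg in auto)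
  have "(\<lambda>n. (\<Sum>k\<le>n. (real k * Pn r \<theta> k u) * Pn r \<theta> (n - k) v)
          + (\<Sum>k\<le>n. Pn r \<theta> k u * (real (n - k) * Pn r \<theta> (n - k) v))) sums (BB u * AA v + AA u * BB v)"
    by (rule sums_add[OF s1 s2])
  moreover have "(\<Sum>k\<le>n. (real k * Pn r \<theta> k u) * Pn r \<theta> (n - k) v)
          + (\<Sum>k\<le>n. Pn r \<theta> k u * (real (n - k) * Pn r \<theta> (n - k) v)) = real n * Pn r \<theta> n (u + v)" for n
  proof -
    have "(\<Sum>k\<le>n. (real k * Pn r \<theta> k u) * Pn r \<theta> (n - k) v)
          + (\<Sum>k\<le>n. Pn r \<theta> k u * (real (n - k) * Pn r \<theta> (n - k) v))
        = (\<Sum>k\<le>n. real n * (Pn r \<theta> k u * Pn r \<theta> (n - k) v))"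
      unfolding sum.distrib[symmetric]
      by (intro sum.cong refl) (auto simp: of_nat_diff algebra_simps)
    also have "\<dots> = real n * Pn r \<theta> n (u + v)" by (simp add: conv sum_distrib_left)
    finally show ?thesis .
  qed
  ultimately have "(\<lambda>n. real n * Pn r \<theta> n (u + v)) sums (BB u * AA v + AA u * BB v)" by simp
  then show ?thesis using sums_b[of "u + v"] sums_unique2 by blast
qed

lemma AA_pow: "AA u = AA 1 ^ u"
proof (induction u)
  case 0
  then show ?case by (simp add: AA_0)
next
  case (Suc u)
  have "AA (Suc u) = AA u * AA 1" using AA_mult[of u 1] by simp
  then show ?case using Suc.IH by (simp add: mult.commute)
qed

lemma AA1_fp: "AA 1 = (1 - \<theta>) + \<theta> * AA (1 + r)"
proof -
  have "(\<lambda>n. Pn r \<theta> (Suc n) 1) sums (AA 1 - Pn r \<theta> 0 1)"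
    using sums_Suc_iff[of "\<lambda>n. Pn r \<theta> n 1" "AA 1 - Pn r \<theta> 0 1"] sums_a[of 1] by (simp del: Pn.simps)
  moreover have "(\<lambda>n. Pn r \<theta> (Suc n) 1) sums ((1 - \<theta>) * AA 0 + \<theta> * AA (1 + r))"
  proof -
    have "(\<lambda>n. (1 - \<theta>) * Pn r \<theta> n 0 + \<theta> * Pn r \<theta> n (1 + r)) sums ((1 - \<theta>) * AA 0 + \<theta> * AA (1 + r))"
      by (intro sums_add sums_mult sums_a)
    then show ?thesis by simp
  qed
  ultimately show ?thesis using sums_unique2 AA_0 by force
qed

lemma AA1_eq: "AA 1 = \<rho>"
proof (rule ccontr)
  assume ne: "AA 1 \<noteq> \<rho>"
  have le: "AA 1 \<le> \<rho>" using AA_le[of 1] by simp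
  then have lt: "AA 1 < \<rho>" using ne by simp
  have fx: "AA 1 = (1 - \<theta>) + \<theta> * AA 1 ^ (r + 1)" using AA1_fp AA_pow[of "1 + r"] by (simp add: add.commute)
  have "\<rho> - AA 1 = \<theta> * (\<rho> ^ (r + 1) - AA 1 ^ (r + 1))"
    using fx fp by (simp add: algebra_simps)
  also have "\<dots> \<le> \<theta> * (real (r + 1) * \<rho> ^ r * (\<rho> - AA 1))"
    using pow_diff_le[OF AA_nonneg le, of "r + 1"] th0 by (intro mult_left_mono) auto
  also have "\<dots> = (\<theta> * (real r + 1) * \<rho> ^ r) * (\<rho> - AA 1)" by (simp add: algebra_simps)
  also have "\<dots> < 1 * (\<rho> - AA 1)"
    using key_lt lt by (intro mult_strict_right_mono) auto
  finally show False by simp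
qed

lemma AA_eq: "AA u = \<rho> ^ u"
  by (subst AA_pow) (simp only: AA1_eq)

lemma BB1_fp: "BB 1 = AA 1 + \<theta> * BB (1 + r)"
proof -
  have "(\<lambda>n. real (Suc n) * Pn r \<theta> (Suc n) 1) sums (BB 1 - 0)"
    using sums_Suc_iff[of "\<lambda>n. real n * Pn r \<theta> n 1" "BB 1 - 0"] sums_b[of 1] by (simp del: Pn.simps of_nat_Suc)
  moreover have "(\<lambda>n. real (Suc n) * Pn r \<theta> (Suc n) 1) sums ((1 - \<theta>) * 1 + \<theta> * (BB (1 + r) + AA (1 + r)))"
  proof -
    have z: "(\<lambda>n. real (Suc n) * Pn r \<theta> n 0) sums 1"
    proof -
      have "(\<lambda>n. real (Suc n) * Pn r \<theta> n 0) = (\<lambda>n. if n = 0 then 1 else 0)" by (rule ext) (simp add: p_zero)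
      then show ?thesis using sums_single[of 0 "\<lambda>_. 1::real"] by simp
    qed
    have "(\<lambda>n. (1 - \<theta>) * (real (Suc n) * Pn r \<theta> n 0) + \<theta> * (real n * Pn r \<theta> n (1 + r) + Pn r \<theta> n (1 + r)))
       sums ((1 - \<theta>) * 1 + \<theta> * (BB (1 + r) + AA (1 + r)))"
      by (intro sums_add sums_mult z sums_a sums_b)
    moreover have "(1 - \<theta>) * (real (Suc n) * Pn r \<theta> n 0) + \<theta> * (real n * Pn r \<theta> n (1 + r) + Pn r \<theta> n (1 + r))
       = real (Suc n) * Pn r \<theta> (Suc n) 1" for n
      by (simp add: algebra_simps)
    ultimately show ?thesis by simp
  qed
  ultimately have "BB 1 = (1 - \<theta>) * 1 + \<theta> * (BB (1 + r) + AA (1 + r))" using sums_unique2 by force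
  then show ?thesis using AA1_fp by (simp add: algebra_simps)
qed

lemma BB_pow: "BB (Suc k) = real (Suc k) * \<rho> ^ k * BB 1"
proof (induction k)
  case 0
  then show ?case by simp
next
  case (Suc k)
  have "BB (Suc (Suc k)) = BB (Suc k) * AA 1 + AA (Suc k) * BB 1"
    using BB_mult[of "Suc k" 1] by simp
  also have "\<dots> = real (Suc (Suc k)) * \<rho> ^ Suc k * BB 1"
    using Suc AA_eq by (simp add: algebra_simps)
  finally show ?case .
qed

lemma BB1_eq: "BB 1 = \<rho> * LL"
proof -
  have "BB 1 = \<rho> + \<theta> * (real (Suc r) * \<rho> ^ r * BB 1)"
    using BB1_fp AA1_eq BB_pow[of r] by simp
  then have "BB 1 * (1 - \<theta> * (real r + 1) * \<rho> ^ r) = \<rho>" by (simp add: algebra_simps)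
  then have h: "BB 1 * (1 - \<theta> * (real r + 1) * \<rho> ^ r) * LL = \<rho> * LL" by simp
  have "BB 1 = BB 1 * (LL * (1 - \<theta> * (real r + 1) * \<rho> ^ r))" by (simp only: LL_eq mult_1_right)
  also have "\<dots> = BB 1 * (1 - \<theta> * (real r + 1) * \<rho> ^ r) * LL" by (simp only: mult_ac)
  also have "\<dots> = \<rho> * LL" by (rule h)
  finally show ?thesis .
qed

lemma BB_eq: "BB u = real u * \<rho> ^ u * LL"
proof (cases u)
  case 0
  then show ?thesis by (simp add: BB_0)
next
  case (Suc k)
  then show ?thesis using BB_pow[of k] BB1_eq by (simp add: algebra_simps)
qed

lemma deriv_gen: "(gen_fun r \<theta> has_real_derivative BB 1) (at_left 1)"
proof -
  let ?p = "\<lambda>n. Pn r \<theta> n 1"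
  define G where "G y = (\<Sum>n. ?p n * (\<Sum>k<n. y ^ k))" for y :: real
  have bound: "norm (?p n * (\<Sum>k<n. y ^ k)) \<le> real n * ?p n" if y: "y \<in> {0..1}" for n y
  proof -
    have s0: "0 \<le> (\<Sum>k<n. y ^ k)" using y by (intro sum_nonneg) auto
    have s1: "(\<Sum>k<n. y ^ k) \<le> (\<Sum>k<n. (1::real))" using y by (intro sum_mono power_le_one) auto
    have "norm (?p n * (\<Sum>k<n. y ^ k)) = ?p n * (\<Sum>k<n. y ^ k)"
      using s0 p_nonneg[of n 1] by simp
    also have "\<dots> \<le> ?p n * real n" using s1 p_nonneg[of n 1] by (intro mult_left_mono) auto
    finally show ?thesis by (simp add: mult.commute)
  qed
  have sb: "summable (\<lambda>n. real n * ?p n)" by (rule summable_b)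
  have ul: "uniform_limit {0..1} (\<lambda>N y. \<Sum>i<N. ?p i * (\<Sum>k<i. y ^ k)) G sequentially"
    unfolding G_def by (rule Weierstrass_m_test[OF bound sb])
  have cont: "continuous_on {0..1} G"
    by (rule uniform_limit_theorem[OF _ ul]) (auto intro!: always_eventually continuous_intros)
  have G1: "G 1 = BB 1" unfolding G_def BB_def by (simp add: mult.commute)
  have "(G \<longlongrightarrow> G 1) (at 1 within {0..1})" using cont by (simp add: continuous_on_def)
  then have lim: "(G \<longlongrightarrow> BB 1) (at_left 1)" using G1 at_within_Icc_at_left[of "0::real" 1] by simp
  have th': "0 \<le> \<theta>" "\<theta> \<le> 1" using th0 th1 by auto
  have eq: "(gen_fun r \<theta> y - gen_fun r \<theta> 1) / (y - 1) = G y" if y: "y \<in> {0<..<1}" for y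
  proof -
    have sy: "summable (\<lambda>n. y ^ n * ?p n)"
      using y p_nonneg by (intro summable_comparison_test[OF _ summable_a[of 1]])
        (auto intro!: mult_left_le_one_le power_le_one)
    have sG: "summable (\<lambda>n. ?p n * (\<Sum>k<n. y ^ k))"
      using y bound by (intro summable_comparison_test[OF _ sb]) auto
    have "gen_fun r \<theta> y - gen_fun r \<theta> 1 = (\<Sum>n. y ^ n * ?p n) - (\<Sum>n. ?p n)"
      using gen_fun_eq[OF th', of y r] gen_fun_eq[OF th', of 1 r] y summable_a[of 1] by simp
    also have "\<dots> = (\<Sum>n. y ^ n * ?p n - ?p n)"
      by (rule suminf_diff[OF sy summable_a])
    also have "\<dots> = (\<Sum>n. (y - 1) * (?p n * (\<Sum>k<n. y ^ k)))"
    proof (intro suminf_cong)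
      fix n
      show "y ^ n * ?p n - ?p n = (y - 1) * (?p n * (\<Sum>k<n. y ^ k))"
      proof -
        have "y ^ n * ?p n - ?p n = (y ^ n - 1) * ?p n" by (simp add: algebra_simps)
        also have "\<dots> = (y - 1) * (\<Sum>k<n. y ^ k) * ?p n" by (simp only: power_diff_1_eq)
        also have "\<dots> = (y - 1) * (?p n * (\<Sum>k<n. y ^ k))" by (simp only: mult_ac)
        finally show ?thesis .
      qed
    qed
    also have "\<dots> = (y - 1) * G y" unfolding G_def using sG by (rule suminf_mult)
    finally show ?thesis using y by simp
  qed
  have "((\<lambda>y. (gen_fun r \<theta> y - gen_fun r \<theta> 1) / (y - 1)) \<longlongrightarrow> BB 1) (at_left 1)"
  proof (rule Lim_transform_eventually[OF lim])
    show "\<forall>\<^sub>F y in at_left 1. G y = (gen_fun r \<theta> y - gen_fun r \<theta> 1) / (y - 1)"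
    proof -
      have ev: "\<forall>\<^sub>F y in at_left 1. y \<in> {0<..<(1::real)}" by (rule eventually_at_left_real) simp
      show ?thesis using ev by (rule eventually_mono) (erule eq[symmetric])
    qed
  qed
  then show ?thesis by (simp add: has_field_derivative_iff)
qed

lemma cond_mean_eq: "cond_mean (bern_paths \<theta>) (hit_time 1 r (int u)) = real u * LL"
proof -
  have th': "0 \<le> \<theta>" "\<theta> \<le> 1" using th0 th1 by auto
  have "cond_mean (bern_paths \<theta>) (hit_time 1 r (int u)) = BB u / AA u"
    unfolding AA_def BB_def by (rule cond_mean_hit[OF th' summable_a summable_b])
  also have "\<dots> = real u * LL" using rho_pos by (simp add: AA_eq BB_eq)
  finally show ?thesis .
qed

lemma alt_form: "\<rho> / ((1 - \<theta>) * (real r + 1) - real r * \<rho>) = LL"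
proof -
  define P where "P = \<rho> ^ r"
  have f: "\<rho> = (1 - \<theta>) + \<theta> * \<rho> * P" using fp unfolding P_def by (simp add: mult.assoc)
  have "(1 - \<theta>) * (real r + 1) - real r * \<rho> = \<rho> * (1 - \<theta> * (real r + 1) * P)"
    using f by algebra
  then show ?thesis unfolding LL_def P_def using rho_pos by simp
qed

end



lemma least_enat_eq:
  "(if \<exists>t. Q t then enat (LEAST t. Q t) else \<infinity>) = enat n \<longleftrightarrow> (Q n \<and> (\<forall>t<n. \<not> Q t))"
proof
  assume h: "(if \<exists>t. Q t then enat (LEAST t. Q t) else \<infinity>) = enat n"
  then have ex: "\<exists>t. Q t" by (auto split: if_splits)
  with h have n: "n = (LEAST t. Q t)" by auto
  show "Q n \<and> (\<forall>t<n. \<not> Q t)" using LeastI_ex[OF ex] not_less_Least n by blast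
next
  assume h: "Q n \<and> (\<forall>t<n. \<not> Q t)"
  then have "(LEAST t. Q t) = n" by (intro Least_equality) (auto simp: not_less[symmetric])
  then show "(if \<exists>t. Q t then enat (LEAST t. Q t) else \<infinity>) = enat n" using h by auto
qed

lemma enat_ext: "(\<And>n. (x::enat) = enat n \<longleftrightarrow> y = enat n) \<Longrightarrow> x = y"
  by (cases x; cases y) auto

lemma trust_ok_iff:
  assumes "0 < \<alpha> + \<beta>"
  shows "trust_ok \<alpha> \<beta> 1 r S F \<longleftrightarrow> int F - int r * int S < int r * int \<alpha> - int \<beta> + 1"
proof -
  define D where "D = real \<alpha> + real \<beta> + real S + real F"
  have "0 < real \<alpha> + real \<beta>" using assms by (metis of_nat_0_less_iff of_nat_add)
  then have D: "0 < D" unfolding D_def by (simp add: add_pos_nonneg)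
  have "trust_ok \<alpha> \<beta> 1 r S F \<longleftrightarrow> 0 \<le> (real r * (real \<alpha> + real S) - (real \<beta> + real F)) / D"
  proof -
    have h1: "1 - (real \<alpha> + real S) / D = (real \<beta> + real F) / D"
      using D unfolding D_def by (simp add: field_simps)
    have "real r * ((real \<alpha> + real S) / D) - real 1 * (1 - (real \<alpha> + real S) / D)
        = (real r * (real \<alpha> + real S) - (real \<beta> + real F)) / D"
      unfolding h1 by (simp add: diff_divide_distrib)
    then show ?thesis unfolding trust_ok_def theta_hat_def D_def[symmetric] by simp
  qed
  also have "\<dots> \<longleftrightarrow> 0 \<le> real r * (real \<alpha> + real S) - (real \<beta> + real F)"
    using D by (simp add: zero_le_divide_iff)
  also have "\<dots> \<longleftrightarrow> int F - int r * int S < int r * int \<alpha> - int \<beta> + 1"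
  proof -
    have "real r * (real \<alpha> + real S) - (real \<beta> + real F) = real_of_int (int r * int \<alpha> + int r * int S - int \<beta> - int F)"
      by (simp add: algebra_simps)
    then show ?thesis by linarith
  qed
  finally show ?thesis .
qed

lemma trust_inv:
  assumes ab: "0 < \<alpha> + \<beta>"
  shows "(\<forall>k<t. walk 1 r \<omega> k < (int r * int \<alpha> - int \<beta> + 1)) \<longrightarrow>
     (int (F_hat \<alpha> \<beta> 1 r \<omega> t) - int r * int (S_hat \<alpha> \<beta> 1 r \<omega> t) = walk 1 r \<omega> t
      \<and> (snd (snd (trust_state \<alpha> \<beta> 1 r \<omega> t)) \<longleftrightarrow> walk 1 r \<omega> t < (int r * int \<alpha> - int \<beta> + 1)))"
proof (induction t)
  case 0
  show ?case unfolding S_hat_def F_hat_def using trust_ok_iff[OF ab, where r=r and S=0 and F=0] by simp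
next
  case (Suc t)
  show ?case
  proof
    assume all: "\<forall>k<Suc t. walk 1 r \<omega> k < (int r * int \<alpha> - int \<beta> + 1)"
    obtain S F ok where st: "trust_state \<alpha> \<beta> 1 r \<omega> t = (S, F, ok)" by (cases "trust_state \<alpha> \<beta> 1 r \<omega> t") auto
    have IH: "int F - int r * int S = walk 1 r \<omega> t" "ok \<longleftrightarrow> walk 1 r \<omega> t < (int r * int \<alpha> - int \<beta> + 1)"
      using Suc.IH all st unfolding S_hat_def F_hat_def by auto
    have ok: ok using IH(2) all by simp
    have w: "walk 1 r \<omega> (Suc t) = walk 1 r \<omega> t + walk_step 1 r (\<omega> !! t)"
      unfolding walk_def by simp
    define S' where "S' = (if \<omega> !! t then Suc S else S)"
    define F' where "F' = (if \<omega> !! t then F else Suc F)"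
    have ts: "trust_state \<alpha> \<beta> 1 r \<omega> (Suc t) = (S', F', trust_ok \<alpha> \<beta> 1 r S' F')"
      using st ok unfolding S'_def F'_def by (simp add: Let_def)
    have e: "int F' - int r * int S' = walk 1 r \<omega> (Suc t)"
      using IH(1) unfolding w S'_def F'_def walk_step_def by (auto simp: algebra_simps)
    show "int (F_hat \<alpha> \<beta> 1 r \<omega> (Suc t)) - int r * int (S_hat \<alpha> \<beta> 1 r \<omega> (Suc t)) = walk 1 r \<omega> (Suc t) \<and>
      (snd (snd (trust_state \<alpha> \<beta> 1 r \<omega> (Suc t))) \<longleftrightarrow> walk 1 r \<omega> (Suc t) < (int r * int \<alpha> - int \<beta> + 1))"
      unfolding S_hat_def F_hat_def ts using e trust_ok_iff[OF ab, where r=r and S=S' and F=F'] by simp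
  qed
qed

lemma trust_tau_eq:
  assumes ab: "0 < \<alpha> + \<beta>"
  shows "trust_tau \<alpha> \<beta> 1 r \<omega> = hit_time 1 r (int r * int \<alpha> - int \<beta> + 1) \<omega>"
proof -
  define uc where "uc = int r * int \<alpha> - int \<beta> + 1"
  define P where "P t = trust_ok \<alpha> \<beta> 1 r (S_hat \<alpha> \<beta> 1 r \<omega> t) (F_hat \<alpha> \<beta> 1 r \<omega> t)" for t
  have E: "P t \<longleftrightarrow> walk 1 r \<omega> t < uc" if "\<forall>k<t. walk 1 r \<omega> k < uc" for t
    using trust_inv[OF ab, where r=r and t=t and \<omega>=\<omega>] that trust_ok_iff[OF ab] unfolding P_def uc_def by simp
  have A: "(\<forall>k<n. P k) \<longleftrightarrow> (\<forall>k<n. walk 1 r \<omega> k < uc)" for n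
  proof (induction n)
    case 0
    then show ?case by simp
  next
    case (Suc n)
    show ?case
    proof
      assume h: "\<forall>k<Suc n. P k"
      then have "\<forall>k<n. walk 1 r \<omega> k < uc" using Suc by auto
      moreover have "walk 1 r \<omega> n < uc" using E[OF calculation] h by simp
      ultimately show "\<forall>k<Suc n. walk 1 r \<omega> k < uc" using less_Suc_eq by auto
    next
      assume h: "\<forall>k<Suc n. walk 1 r \<omega> k < uc"
      then have "\<forall>k<n. P k" using Suc by auto
      moreover have "P n" using E h by simp
      ultimately show "\<forall>k<Suc n. P k" using less_Suc_eq by auto
    qed
  qed
  show ?thesis
  proof (rule enat_ext)
    fix n
    have "trust_tau \<alpha> \<beta> 1 r \<omega> = enat n \<longleftrightarrow> (\<not> P n \<and> (\<forall>t<n. P t))"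
      unfolding trust_tau_def P_def[symmetric] by (subst least_enat_eq) simp
    also have "\<dots> \<longleftrightarrow> (uc \<le> walk 1 r \<omega> n \<and> (\<forall>t<n. walk 1 r \<omega> t < uc))"
      using A E by auto
    also have "\<dots> \<longleftrightarrow> hit_time 1 r uc \<omega> = enat n" by (simp add: hit_eq)
    finally show "trust_tau \<alpha> \<beta> 1 r \<omega> = enat n \<longleftrightarrow> hit_time 1 r (int r * int \<alpha> - int \<beta> + 1) \<omega> = enat n"
      unfolding uc_def .
  qed
qed

theorem lemma3p4:
  fixes r u \<alpha> \<beta> :: nat and \<theta> \<rho> :: real
  assumes "0 < r"
    and "1 / (real r + 1) < \<theta>" and "\<theta> < 1"
    and "0 \<le> \<rho>" and "\<rho> < 1"
    and "\<rho> = (1 - \<theta>) + \<theta> * \<rho> ^ (r + 1)"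
    and "0 < \<alpha> + \<beta>"
  shows "(\<exists>D. (gen_fun r \<theta> has_real_derivative D) (at_left 1)
            \<and> cond_mean (bern_paths \<theta>) (hit_time 1 r (int u)) = real u * D / \<rho>
            \<and> cond_mean (bern_paths \<theta>) (hit_time 1 r (int u))
                = real u * \<rho> / ((1 - \<theta>) * (real r + 1) - real r * \<rho>))
       \<and> q \<alpha> \<beta> 1 r \<theta>
           = cond_mean (bern_paths \<theta>) (hit_time 1 r (int r * int \<alpha> - int \<beta> + 1))"
proof -
  have th0: "0 < \<theta>"
    using assms(2) by (smt (verit) divide_pos_pos of_nat_0_le_iff)
  note A = assms(1) th0 assms(3) assms(4) assms(5) assms(6)
  have rp: "0 < \<rho>" by (rule rho_pos[OF A])
  have c: "cond_mean (bern_paths \<theta>) (hit_time 1 r (int u)) = real u * LL r \<theta> \<rho>"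
    by (rule cond_mean_eq[OF A])
  have part1: "(gen_fun r \<theta> has_real_derivative BB r \<theta> 1) (at_left 1)
            \<and> cond_mean (bern_paths \<theta>) (hit_time 1 r (int u)) = real u * BB r \<theta> 1 / \<rho>
            \<and> cond_mean (bern_paths \<theta>) (hit_time 1 r (int u))
                = real u * \<rho> / ((1 - \<theta>) * (real r + 1) - real r * \<rho>)"
  proof (intro conjI)
    show "(gen_fun r \<theta> has_real_derivative BB r \<theta> 1) (at_left 1)" by (rule deriv_gen[OF A])
    show "cond_mean (bern_paths \<theta>) (hit_time 1 r (int u)) = real u * BB r \<theta> 1 / \<rho>"
      using c BB1_eq[OF A] rp by simp
    show "cond_mean (bern_paths \<theta>) (hit_time 1 r (int u))
                = real u * \<rho> / ((1 - \<theta>) * (real r + 1) - real r * \<rho>)"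
      using c alt_form[OF A] by (simp add: times_divide_eq_right[symmetric])
  qed
  have part2: "q \<alpha> \<beta> 1 r \<theta> = cond_mean (bern_paths \<theta>) (hit_time 1 r (int r * int \<alpha> - int \<beta> + 1))"
  proof -
    have "trust_tau \<alpha> \<beta> 1 r = hit_time 1 r (int r * int \<alpha> - int \<beta> + 1)"
      by (rule ext) (rule trust_tau_eq[OF assms(7)])
    then show ?thesis unfolding q_def by (rule arg_cong)
  qed
  show ?thesis using part1 part2 by blast
qed


end
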